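(* Let $(X,d)$ be a complete metric space and let $T\colon X\to X$ be a mapping satisfying: (i) for every $\varepsilon>0$ there exists $\delta>0$ such that for all $x,y\in X$, $\frac{1}{2}\{d(x,Ty)+d(y,Tx)\}<\varepsilon+\delta$ implies $d(Tx,Ty)\le\varepsilon$; (ii) for all $x,y\in X$, $x\neq y$ implies $d(Tx,Ty)<\frac{1}{2}\{d(x,Ty)+d(y,Tx)\}$. Then $T$ has a unique fixed point. *)

theory Defs
  imports "HOL-Analysis.Analysis"
begin

end

theory Submission
  imports Defs
begin

theorem theorem4p1:
  fixes T :: "'a::complete_space \<Rightarrow> 'a"
  assumes i: "\<And>\<epsilon>. \<epsilon> > 0 \<Longrightarrow> \<exists>\<delta>>0. \<forall>x y.
              (dist x (T y) + dist y (T x)) / 2 < \<epsilon> + \<delta> \<longrightarrow> dist (T x) (T y) \<le> \<epsilon>"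
      and ii: "\<And>x y. x \<noteq> y \<Longrightarrow> dist (T x) (T y) < (dist x (T y) + dist y (T x)) / 2"
  shows "\<exists>!x. T x = x"
proof -
  have uniq: "x = y" if "T x = x" "T y = y" for x y
  proof (rule ccontr)
    assume "x \<noteq> y"
    from ii[OF this] that show False by (simp add: dist_commute)
  qed
  have ex: "\<exists>x. T x = x"
  proof (rule ccontr)
    assume nofix: "\<not> (\<exists>x. T x = x)"
    obtain x0 :: 'a where True by simp
    define x where "x n = (T ^^ n) x0" for n
    have xS: "x (Suc n) = T (x n)" for n by (simp add: x_def)
    define a where "a n = dist (x n) (x (Suc n))" for n
    have ane: "x n \<noteq> x (Suc n)" for n using nofix unfolding xS by (metis (no_types))
    have apos: "a n > 0" for n using ane by (simp add: a_def)
    have adec: "a (Suc n) < a n" for n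
    proof -
      have "a (Suc n) = dist (T (x n)) (T (x (Suc n)))" by (simp add: a_def xS)
      also have "\<dots> < (dist (x n) (T (x (Suc n))) + dist (x (Suc n)) (T (x n))) / 2"
        using ii[OF ane] .
      also have "\<dots> = dist (x n) (x (Suc (Suc n))) / 2" by (simp add: xS)
      also have "\<dots> \<le> (a n + a (Suc n)) / 2"
        using dist_triangle[of "x n" "x (Suc (Suc n))" "x (Suc n)"] by (simp add: a_def)
      finally show ?thesis by simp
    qed
    have decseq: "decseq a" using adec by (simp add: decseq_SucI less_imp_le)
    obtain r where r: "a \<longlonglongrightarrow> r" "\<And>n. r \<le> a n"
      proof (rule decseq_convergent[OF decseq, of 0])
      show "\<forall>i. 0 \<le> a i" using apos less_imp_le by blast
    qed blast
    have r0: "r = 0"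
    proof (rule ccontr)
      assume "r \<noteq> 0"
      moreover have "r \<ge> 0" using LIMSEQ_le_const[OF r(1), of 0] apos less_imp_le by blast
      ultimately have "r > 0" by simp
      then obtain \<delta> where d: "\<delta> > 0" and dP: "\<And>x y.
              (dist x (T y) + dist y (T x)) / 2 < r + \<delta> \<Longrightarrow> dist (T x) (T y) \<le> r"
        using i by blast
      have "eventually (\<lambda>n. a n < r + \<delta>) sequentially"
        using r(1) d by (simp add: order_tendstoD(2))
      then obtain n where n: "a n < r + \<delta>" by (meson eventually_sequentially le_refl)
      have "(dist (x n) (T (x (Suc n))) + dist (x (Suc n)) (T (x n))) / 2
            = dist (x n) (x (Suc (Suc n))) / 2" by (simp add: xS)
      also have "\<dots> \<le> (a n + a (Suc n)) / 2"
        using dist_triangle[of "x n" "x (Suc (Suc n))" "x (Suc n)"] by (simp add: a_def)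
      also have "\<dots> < r + \<delta>" using n adec[of n] by simp
      finally have "dist (T (x n)) (T (x (Suc n))) \<le> r" by (rule dP)
      hence "a (Suc n) \<le> r" by (simp add: a_def xS)
      moreover have "a (Suc (Suc n)) < a (Suc n)" by (rule adec)
      ultimately show False using r(2)[of "Suc (Suc n)"] by simp
    qed
    have cauchy: "Cauchy x"
    proof (rule metric_CauchyI)
      fix e :: real assume e: "e > 0"
      define e' where "e' = e / 4"
      have e': "e' > 0" using e by (simp add: e'_def)
      then obtain \<delta> where d: "\<delta> > 0" and dP: "\<And>x y.
              (dist x (T y) + dist y (T x)) / 2 < e' + \<delta> \<Longrightarrow> dist (T x) (T y) \<le> e'"
        using i by blast
      define d0 where "d0 = min \<delta> e'"
      have d0: "d0 > 0" "d0 \<le> \<delta>" "d0 \<le> e'" using d e' by (auto simp: d0_def)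
      have "eventually (\<lambda>n. a n < d0 / 2) sequentially"
        using r(1) r0 d0 by (intro order_tendstoD(2)) auto
      then obtain N where N: "\<And>n. n \<ge> N \<Longrightarrow> a n < d0 / 2" by (meson eventually_sequentially)
      have bnd: "dist (x N) (x (N + k)) \<le> e' + d0 / 2" for k
      proof (induction k)
        case 0 show ?case using e' d0 by simp
      next
        case (Suc k)
        define m where "m = N + k"
        have h: "dist (x N) (x m) \<le> e' + d0/2" using Suc m_def by simp
        have aN: "a N < d0/2" and am: "a m < d0/2" using N m_def by auto
        have t1: "dist (x N) (T (x m)) \<le> dist (x N) (x m) + a m"
          using dist_triangle[of "x N" "x (Suc m)" "x m"] by (simp add: a_def xS)
        have t2: "dist (x m) (T (x N)) \<le> dist (x N) (x m) + a N"
          using dist_triangle[of "x m" "x (Suc N)" "x N"] by (simp add: a_def xS dist_commute)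
        have "(dist (x N) (T (x m)) + dist (x m) (T (x N))) / 2 < e' + \<delta>"
          using t1 t2 h aN am d0 by simp
        hence c: "dist (T (x N)) (T (x m)) \<le> e'" by (rule dP)
        have "dist (x N) (x (Suc m)) \<le> a N + dist (x (Suc N)) (x (Suc m))"
          using dist_triangle[of "x N" "x (Suc m)" "x (Suc N)"] by (simp add: a_def)
        also have "\<dots> \<le> d0/2 + e'" using aN c by (simp add: xS)
        finally show ?case by (simp add: m_def)
      qed
      have "\<forall>m\<ge>N. \<forall>n\<ge>N. dist (x m) (x n) < e"
      proof (intro allI impI)
        fix m n assume mn: "m \<ge> N" "n \<ge> N"
        have b1: "dist (x N) (x m) \<le> e' + d0/2" using bnd[of "m - N"] mn by simp
        have b2: "dist (x N) (x n) \<le> e' + d0/2" using bnd[of "n - N"] mn by simp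
        have "dist (x m) (x n) \<le> dist (x N) (x m) + dist (x N) (x n)"
          by (rule dist_triangle3)
        also have "\<dots> \<le> 3 * e'" using b1 b2 d0 by simp
        also have "\<dots> < e" using e by (simp add: e'_def)
        finally show "dist (x m) (x n) < e" .
      qed
      thus "\<exists>M. \<forall>m\<ge>M. \<forall>n\<ge>M. dist (x m) (x n) < e" by blast
    qed
    then obtain z where z: "x \<longlonglongrightarrow> z" using Cauchy_convergent convergent_def by blast
    have zS: "(\<lambda>n. x (Suc n)) \<longlonglongrightarrow> z" using z by (rule LIMSEQ_Suc)
    have ineq: "dist (x (Suc n)) (T z) \<le> (dist (x n) (T z) + dist z (x (Suc n))) / 2" for n
    proof (cases "x n = z")
      case True thus ?thesis by (simp add: xS)
    next
      case False
      from ii[OF False] show ?thesis by (simp add: xS)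
    qed
    have L1: "(\<lambda>n. dist (x (Suc n)) (T z)) \<longlonglongrightarrow> dist z (T z)"
      by (intro tendsto_intros zS)
    have L2: "(\<lambda>n. (dist (x n) (T z) + dist z (x (Suc n))) / 2) \<longlonglongrightarrow> (dist z (T z) + dist z z) / 2"
      by (intro tendsto_intros z zS) simp_all
    have "dist z (T z) \<le> (dist z (T z) + dist z z) / 2"
      using L1 L2 ineq by (intro LIMSEQ_le) auto
    hence "dist z (T z) = 0" by simp
    hence "T z = z" by simp
    thus False using nofix by blast
  qed
  from ex uniq show ?thesis by blast
qed

end
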